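(* Let $\mathcal{F}(X)\subseteq\Psi$, with $\Psi$ carrying an admissible hyperspace topology $\Delta$. (i) If $(X,\mathbb{F})$ is weakly mixing of all orders, then $(\Psi,\overline{\mathbb{F}})$ is weakly mixing. (ii) If moreover $\mathbb{F}$ is commutative and there is a base $\beta$ for the topology of $X$ with $U^+=\{A\in\Psi:A\subseteq U\}\in\Delta$ for every $U\in\beta$, then $(\Psi,\overline{\mathbb{F}})$ weakly mixing implies $(X,\mathbb{F})$ weakly mixing of all orders.
   Context: $(X,d)$ compact metric, $\mathbb{F}=(f_n)$ continuous self-maps, $\omega_n=f_n\circ\cdots\circ f_1$; $\mathbb{F}$ is commutative if $f_n\circ f_m=f_m\circ f_n$ for all $n,m$. The system is weakly mixing of order $k$ if for any non-empty open $U_1,\dots,U_k,V_1,\dots,V_k$ there is $n$ with $\omega_n(U_i)\cap V_i\neq\emptyset$ for all $i$; weakly mixing means of order 2. $\mathcal{F}(X)$ denotes non-empty finite subsets; $\Psi\subseteq\mathcal{K}(X)$ is invariant under all $\omega_k$, and the induced system acts by $\overline{\omega}_k(A)=\omega_k(A)$, with mixing notions defined analogously on $(\Psi,\Delta)$. An admissible topology ($x\mapsto\{x\}$ continuous) is of hit-and-miss or hit-and-far-miss type: generated by $U^-=\{A:A\cap U\neq\emptyset\}$ ($U$ open) and sets $(E^c)^+=\{A:A\subseteq E^c\}$ (resp. $(E^c)^{++}=\{A:\exists\varepsilon>0, S_\varepsilon(A)\subseteq E^c\}$) for $E$ in a fixed family of closed sets; induced maps are assumed continuous. *)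

theory Defs
  imports "HOL-Analysis.Analysis"
begin

text \<open>Non-autonomous system: f 1, f 2, ... (f 0 is unused);
  omega f n = f n o ... o f 1, omega f 0 = id.\<close>
fun omega :: "(nat \<Rightarrow> 'a \<Rightarrow> 'a) \<Rightarrow> nat \<Rightarrow> 'a \<Rightarrow> 'a" where
  "omega f 0 = id"
| "omega f (Suc n) = f (Suc n) \<circ> omega f n"

definition omega_bar :: "(nat \<Rightarrow> 'a \<Rightarrow> 'a) \<Rightarrow> nat \<Rightarrow> 'a set \<Rightarrow> 'a set" where
  "omega_bar f n A = omega f n ` A"

definition weakly_mixing_order :: "'b topology \<Rightarrow> (nat \<Rightarrow> 'b \<Rightarrow> 'b) \<Rightarrow> nat \<Rightarrow> bool" where
  "weakly_mixing_order T g k \<longleftrightarrow>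
     (\<forall>U V. (\<forall>i<k. openin T (U i) \<and> U i \<noteq> {} \<and> openin T (V i) \<and> V i \<noteq> {}) \<longrightarrow>
        (\<exists>n\<ge>1. \<forall>i<k. g n ` (U i) \<inter> V i \<noteq> {}))"

definition weakly_mixing :: "'b topology \<Rightarrow> (nat \<Rightarrow> 'b \<Rightarrow> 'b) \<Rightarrow> bool" where
  "weakly_mixing T g \<longleftrightarrow> weakly_mixing_order T g 2"

definition weakly_mixing_all_orders :: "'b topology \<Rightarrow> (nat \<Rightarrow> 'b \<Rightarrow> 'b) \<Rightarrow> bool" where
  "weakly_mixing_all_orders T g \<longleftrightarrow> (\<forall>k\<ge>1. weakly_mixing_order T g k)"

definition commutative_system :: "(nat \<Rightarrow> 'a \<Rightarrow> 'a) \<Rightarrow> bool" where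
  "commutative_system f \<longleftrightarrow> (\<forall>n\<ge>1. \<forall>m\<ge>1. f n \<circ> f m = f m \<circ> f n)"

definition nonempty_compacts :: "'a::topological_space set set" where
  "nonempty_compacts = {A. A \<noteq> {} \<and> compact A}"

definition nonempty_finites :: "'a set set" where
  "nonempty_finites = {A. A \<noteq> {} \<and> finite A}"

definition hit :: "'a set set \<Rightarrow> 'a set \<Rightarrow> 'a set set" where
  "hit \<Psi> U = {A \<in> \<Psi>. A \<inter> U \<noteq> {}}"

definition miss :: "'a set set \<Rightarrow> 'a set \<Rightarrow> 'a set set" where
  "miss \<Psi> U = {A \<in> \<Psi>. A \<subseteq> U}"

definition far_miss :: "'a::metric_space set set \<Rightarrow> 'a set \<Rightarrow> 'a set set" where
  "far_miss \<Psi> U = {A \<in> \<Psi>. \<exists>\<epsilon>>0. {x. \<exists>a\<in>A. dist x a < \<epsilon>} \<subseteq> U}"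

definition hit_and_miss_type :: "'a::metric_space set set \<Rightarrow> 'a set topology \<Rightarrow> bool" where
  "hit_and_miss_type \<Psi> \<Delta> \<longleftrightarrow> (\<exists>\<E>. (\<forall>E\<in>\<E>. closed E) \<and>
     \<Delta> = topology_generated_by ({hit \<Psi> U | U. open U} \<union> {miss \<Psi> (- E) | E. E \<in> \<E>}))"

definition hit_and_far_miss_type :: "'a::metric_space set set \<Rightarrow> 'a set topology \<Rightarrow> bool" where
  "hit_and_far_miss_type \<Psi> \<Delta> \<longleftrightarrow> (\<exists>\<E>. (\<forall>E\<in>\<E>. closed E) \<and>
     \<Delta> = topology_generated_by ({hit \<Psi> U | U. open U} \<union> {far_miss \<Psi> (- E) | E. E \<in> \<E>}))"

definition admissible :: "'a::metric_space set topology \<Rightarrow> bool" where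
  "admissible \<Delta> \<longleftrightarrow> continuous_map euclidean \<Delta> (\<lambda>x. {x})"

end

theory Submission imports Defs begin
definition near :: "'a::metric_space set \<Rightarrow> real \<Rightarrow> 'a set \<Rightarrow> bool" where
  "near A e F \<longleftrightarrow> (\<forall>x\<in>F. \<exists>a\<in>A. dist x a < e) \<and> (\<forall>a\<in>A. \<exists>x\<in>F. dist x a < e)"

definition approx_open :: "'a::metric_space set set \<Rightarrow> bool" where
  "approx_open O' \<longleftrightarrow> (\<forall>A\<in>O'. \<exists>e>0. \<forall>F. finite F \<longrightarrow> F \<noteq> {} \<longrightarrow> near A e F \<longrightarrow> F \<in> O')"

lemma near_mono: "near A e F \<Longrightarrow> e \<le> e' \<Longrightarrow> near A e' F"
  unfolding near_def by (meson less_le_trans)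

lemma gen_approx:
  assumes "\<And>s. s \<in> S \<Longrightarrow> approx_open s" "generate_topology_on S O'"
  shows "approx_open O'"
  using assms(2)
proof induction
  case Empty then show ?case by (simp add: approx_open_def)
next
  case (Int a b)
  show ?case unfolding approx_open_def
  proof
    fix A assume "A \<in> a \<inter> b"
    then obtain e1 e2 where e1: "e1 > 0" "\<forall>F. finite F \<longrightarrow> F \<noteq> {} \<longrightarrow> near A e1 F \<longrightarrow> F \<in> a"
      and e2: "e2 > 0" "\<forall>F. finite F \<longrightarrow> F \<noteq> {} \<longrightarrow> near A e2 F \<longrightarrow> F \<in> b"
      using Int.IH unfolding approx_open_def by blast
    show "\<exists>e>0. \<forall>F. finite F \<longrightarrow> F \<noteq> {} \<longrightarrow> near A e F \<longrightarrow> F \<in> a \<inter> b"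
    proof (intro exI[of _ "min e1 e2"] conjI allI impI)
      fix F :: "'a set" assume F: "finite F" "F \<noteq> {}" "near A (min e1 e2) F"
      have "near A e1 F" "near A e2 F" using near_mono[OF F(3)] by auto
      then show "F \<in> a \<inter> b" using e1 e2 F by blast
    qed (use e1 e2 in auto)
  qed
next
  case (UN K)
  show ?case unfolding approx_open_def
  proof
    fix A assume "A \<in> \<Union>K"
    then obtain k where "k \<in> K" "A \<in> k" by blast
    then obtain e where e: "e > 0" "\<forall>F. finite F \<longrightarrow> F \<noteq> {} \<longrightarrow> near A e F \<longrightarrow> F \<in> k"
      using UN.IH unfolding approx_open_def by meson
    show "\<exists>e>0. \<forall>F. finite F \<longrightarrow> F \<noteq> {} \<longrightarrow> near A e F \<longrightarrow> F \<in> \<Union>K"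
      using e \<open>k \<in> K\<close> by blast
  qed
next
  case (Basis s) then show ?case using assms(1) by blast
qed

lemma approx_hit:
  assumes fin_sub: "nonempty_finites \<subseteq> \<Psi>" and "open U"
  shows "approx_open (hit \<Psi> U)"
  unfolding approx_open_def
proof
  fix A assume "A \<in> hit \<Psi> U"
  then obtain a where a: "a \<in> A" "a \<in> U" unfolding hit_def by blast
  have "\<exists>e>0. ball a e \<subseteq> U" using \<open>open U\<close>[unfolded open_contains_ball] a(2) by blast
  then obtain e where e: "e > 0" "ball a e \<subseteq> U" by blast
  show "\<exists>e>0. \<forall>F. finite F \<longrightarrow> F \<noteq> {} \<longrightarrow> near A e F \<longrightarrow> F \<in> hit \<Psi> U"
  proof (intro exI[of _ e] conjI allI impI)
    fix F :: "'a set" assume F: "finite F" "F \<noteq> {}" "near A e F"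
    then obtain x where "x \<in> F" "dist x a < e" using a unfolding near_def by blast
    then have "x \<in> U" using e by (auto simp: dist_commute)
    moreover have "F \<in> \<Psi>" using F fin_sub unfolding nonempty_finites_def by blast
    ultimately show "F \<in> hit \<Psi> U" using \<open>x \<in> F\<close> unfolding hit_def by blast
  qed (use e in auto)
qed

lemma approx_miss:
  assumes fin_sub: "nonempty_finites \<subseteq> \<Psi>" and Psi_sub: "\<Psi> \<subseteq> nonempty_compacts" and "closed E"
  shows "approx_open (miss \<Psi> (- E))"
  unfolding approx_open_def
proof
  fix A assume A: "A \<in> miss \<Psi> (- E)"
  then have "compact A" "A \<subseteq> -E" using Psi_sub unfolding miss_def nonempty_compacts_def by auto
  then obtain e where e: "0 < e" "\<And>x. x \<in> A \<Longrightarrow> \<exists>G \<in> {-E}. ball x e \<subseteq> G"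
    using Heine_Borel_lemma[of A "{-E}"] \<open>closed E\<close> by auto
  show "\<exists>e>0. \<forall>F. finite F \<longrightarrow> F \<noteq> {} \<longrightarrow> near A e F \<longrightarrow> F \<in> miss \<Psi> (- E)"
  proof (intro exI[of _ e] conjI allI impI)
    fix F :: "'a set" assume F: "finite F" "F \<noteq> {}" "near A e F"
    have "F \<subseteq> -E"
    proof
      fix x assume "x \<in> F"
      then obtain a where "a \<in> A" "dist x a < e" using F unfolding near_def by blast
      then show "x \<in> -E" using e(2)[of a] by (auto simp: dist_commute)
    qed
    moreover have "F \<in> \<Psi>" using F fin_sub unfolding nonempty_finites_def by blast
    ultimately show "F \<in> miss \<Psi> (-E)" unfolding miss_def by blast
  qed (use e in auto)
qed

lemma approx_far_miss:
  assumes fin_sub: "nonempty_finites \<subseteq> \<Psi>"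
  shows "approx_open (far_miss \<Psi> (- E))"
  unfolding approx_open_def
proof
  fix A assume A: "A \<in> far_miss \<Psi> (- E)"
  then obtain \<epsilon> where \<epsilon>: "\<epsilon> > 0" "{x. \<exists>a\<in>A. dist x a < \<epsilon>} \<subseteq> -E"
    unfolding far_miss_def by blast
  show "\<exists>e>0. \<forall>F. finite F \<longrightarrow> F \<noteq> {} \<longrightarrow> near A e F \<longrightarrow> F \<in> far_miss \<Psi> (- E)"
  proof (intro exI[of _ "\<epsilon>/2"] conjI allI impI)
    fix F :: "'a set" assume F: "finite F" "F \<noteq> {}" "near A (\<epsilon>/2) F"
    have "{y. \<exists>x\<in>F. dist y x < \<epsilon>/2} \<subseteq> -E"
    proof
      fix y assume "y \<in> {y. \<exists>x\<in>F. dist y x < \<epsilon>/2}"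
      then obtain x where x: "x \<in> F" "dist y x < \<epsilon>/2" by blast
      then obtain a where "a \<in> A" "dist x a < \<epsilon>/2" using F unfolding near_def by blast
      moreover have "dist y a \<le> dist y x + dist x a" by (rule dist_triangle)
      ultimately have "dist y a < \<epsilon>" using x by linarith
      then show "y \<in> -E" using \<epsilon> \<open>a \<in> A\<close> by blast
    qed
    moreover have "F \<in> \<Psi>" using F fin_sub unfolding nonempty_finites_def by blast
    ultimately show "F \<in> far_miss \<Psi> (-E)" unfolding far_miss_def using \<epsilon>(1)
      by (intro CollectI conjI exI[of _ "\<epsilon>/2"]) auto
  qed (use \<epsilon> in auto)
qed

lemma approx_Delta:
  assumes fin_sub: "nonempty_finites \<subseteq> \<Psi>" and Psi_sub: "\<Psi> \<subseteq> nonempty_compacts"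
    and hm_type: "hit_and_miss_type \<Psi> \<Delta> \<or> hit_and_far_miss_type \<Psi> \<Delta>"
    and "openin \<Delta> O'"
  shows "approx_open O'"
  using hm_type
proof
  assume "hit_and_miss_type \<Psi> \<Delta>"
  then obtain \<E> where E: "\<forall>E\<in>\<E>. closed E"
    "\<Delta> = topology_generated_by ({hit \<Psi> U | U. open U} \<union> {miss \<Psi> (- E) | E. E \<in> \<E>})"
    unfolding hit_and_miss_type_def by blast
  show ?thesis
    apply (rule gen_approx[of "{hit \<Psi> U | U. open U} \<union> {miss \<Psi> (- E) | E. E \<in> \<E>}"])
    using approx_hit[OF fin_sub] approx_miss[OF fin_sub Psi_sub] E(1) apply auto[1]
    using assms(4) unfolding E(2) openin_topology_generated_by_iff .
next
  assume "hit_and_far_miss_type \<Psi> \<Delta>"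
  then obtain \<E> where E: "\<forall>E\<in>\<E>. closed E"
    "\<Delta> = topology_generated_by ({hit \<Psi> U | U. open U} \<union> {far_miss \<Psi> (- E) | E. E \<in> \<E>})"
    unfolding hit_and_far_miss_type_def by blast
  show ?thesis
    apply (rule gen_approx[of "{hit \<Psi> U | U. open U} \<union> {far_miss \<Psi> (- E) | E. E \<in> \<E>}"])
    using approx_hit[OF fin_sub] approx_far_miss[OF fin_sub] apply auto[1]
    using assms(4) unfolding E(2) openin_topology_generated_by_iff .
qed

lemma hit_open:
  assumes hm_type: "hit_and_miss_type \<Psi> \<Delta> \<or> hit_and_far_miss_type \<Psi> \<Delta>" and "open U"
  shows "openin \<Delta> (hit \<Psi> U)"
proof -
  show ?thesis using hm_type
  proof
    assume "hit_and_miss_type \<Psi> \<Delta>"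
    then obtain \<E> where E: "\<Delta> = topology_generated_by ({hit \<Psi> U | U. open U} \<union> {miss \<Psi> (- E) | E. E \<in> \<E>})"
      unfolding hit_and_miss_type_def by blast
    have "hit \<Psi> U \<in> {hit \<Psi> U | U. open U} \<union> {miss \<Psi> (- E) | E. E \<in> \<E>}"
      using \<open>open U\<close> by blast
    then show ?thesis unfolding E by (rule topology_generated_by_Basis)
  next
    assume "hit_and_far_miss_type \<Psi> \<Delta>"
    then obtain \<E> where E: "\<Delta> = topology_generated_by ({hit \<Psi> U | U. open U} \<union> {far_miss \<Psi> (- E) | E. E \<in> \<E>})"
      unfolding hit_and_far_miss_type_def by blast
    have "hit \<Psi> U \<in> {hit \<Psi> U | U. open U} \<union> {far_miss \<Psi> (- E) | E. E \<in> \<E>}"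
      using \<open>open U\<close> by blast
    then show ?thesis unfolding E by (rule topology_generated_by_Basis)
  qed
qed

lemma finite_mixing:
  assumes wm: "weakly_mixing_all_orders euclidean g" and "finite P"
    and P: "\<forall>(U,V)\<in>P. open U \<and> U\<noteq>{} \<and> open V \<and> V\<noteq>{}"
  shows "\<exists>n\<ge>1. \<forall>(U,V)\<in>P. g n ` U \<inter> V \<noteq> {}"
proof -
  obtain xs where xs: "set xs = P" using finite_list[OF \<open>finite P\<close>] by blast
  define U where "U i = (if i < length xs then fst (xs!i) else UNIV)" for i
  define V where "V i = (if i < length xs then snd (xs!i) else UNIV)" for i
  have wmo: "weakly_mixing_order euclidean g (Suc (length xs))"
    using wm unfolding weakly_mixing_all_orders_def by simp
  have hyp: "\<forall>i<Suc (length xs). openin euclidean (U i) \<and> U i \<noteq> {} \<and> openin euclidean (V i) \<and> V i \<noteq> {}"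
  proof (intro allI impI)
    fix i assume "i < Suc (length xs)"
    show "openin euclidean (U i) \<and> U i \<noteq> {} \<and> openin euclidean (V i) \<and> V i \<noteq> {}"
    proof (cases "i < length xs")
      case True
      then have "xs!i \<in> P" using xs by auto
      then show ?thesis using P True unfolding U_def V_def by (auto simp: open_openin[symmetric])
    qed (auto simp: U_def V_def)
  qed
  have "\<exists>n\<ge>1. \<forall>i<Suc (length xs). g n ` (U i) \<inter> V i \<noteq> {}"
    by (rule wmo[unfolded weakly_mixing_order_def, THEN spec[where x=U], THEN spec[where x=V], THEN mp, OF hyp])
  then obtain n where n: "n \<ge> 1" "\<forall>i<Suc (length xs). g n ` (U i) \<inter> V i \<noteq> {}"
    by blast
  show ?thesis
  proof (intro exI[of _ n] conjI ballI)
    fix p assume "p \<in> P"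
    then obtain i where i: "i < length xs" "xs!i = p" using xs by (auto simp: in_set_conv_nth)
    then show "case p of (U, V) \<Rightarrow> g n ` U \<inter> V \<noteq> {}"
      using n(2)[rule_format, of i] unfolding U_def V_def by (cases p) auto
  qed (use n in auto)
qed

lemma finite_cover:
  fixes A :: "'a::metric_space set"
  assumes "compact A" "A \<noteq> {}" "e > 0"
  shows "\<exists>C. finite C \<and> C \<subseteq> A \<and> C \<noteq> {} \<and> (\<forall>a\<in>A. \<exists>c\<in>C. dist a c < e)"
proof -
  have "\<exists>k. finite k \<and> k \<subseteq> A \<and> A \<subseteq> (\<Union>x\<in>k. ball x e)"
    using seq_compact_imp_totally_bounded[OF compact_imp_seq_compact[OF assms(1)], rule_format, OF assms(3)] .
  then obtain C where C: "finite C" "C \<subseteq> A" "A \<subseteq> (\<Union>x\<in>C. ball x e)"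
    by blast
  then have "C \<noteq> {}" using assms(2) by auto
  moreover have "\<forall>a\<in>A. \<exists>c\<in>C. dist a c < e"
  proof
    fix a assume "a \<in> A"
    then obtain c where "c \<in> C" "a \<in> ball c e" using C(3) by blast
    then show "\<exists>c\<in>C. dist a c < e" by (auto simp: dist_commute)
  qed
  ultimately show ?thesis using C(1,2) by blast
qed

lemma pair_step:
  fixes g :: "'a::metric_space \<Rightarrow> 'a"
  assumes Ue: "\<forall>F. finite F \<longrightarrow> F \<noteq> {} \<longrightarrow> near A e F \<longrightarrow> F \<in> \<U>"
    and Ve: "\<forall>F. finite F \<longrightarrow> F \<noteq> {} \<longrightarrow> near B e' F \<longrightarrow> F \<in> \<V>"
    and C: "finite C" "C \<subseteq> A" "C \<noteq> {}" "\<forall>a\<in>A. \<exists>c\<in>C. dist a c < e/2"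
    and D: "finite D" "D \<subseteq> B" "D \<noteq> {}" "\<forall>b\<in>B. \<exists>d\<in>D. dist b d < e'/2"
    and mix: "\<forall>c\<in>C. \<forall>d\<in>D. g ` ball c (e/2) \<inter> ball d (e'/2) \<noteq> {}"
  shows "\<exists>F\<in>\<U>. g ` F \<in> \<V>"
proof -
  have "\<forall>p\<in>C\<times>D. \<exists>x. dist (fst p) x < e/2 \<and> dist (snd p) (g x) < e'/2"
  proof
    fix p assume "p \<in> C\<times>D"
    then have "g ` ball (fst p) (e/2) \<inter> ball (snd p) (e'/2) \<noteq> {}" using mix by auto
    then show "\<exists>x. dist (fst p) x < e/2 \<and> dist (snd p) (g x) < e'/2" by auto
  qed
  then have "\<exists>x. \<forall>p\<in>C\<times>D. dist (fst p) (x p) < e/2 \<and> dist (snd p) (g (x p)) < e'/2"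
    by (rule bchoice)
  then obtain x where x0: "\<forall>p\<in>C\<times>D. dist (fst p) (x p) < e/2 \<and> dist (snd p) (g (x p)) < e'/2"
    by blast
  have x: "\<And>p. p \<in> C\<times>D \<Longrightarrow> dist (fst p) (x p) < e/2 \<and> dist (snd p) (g (x p)) < e'/2"
    using x0 by blast
  define F where "F = x ` (C\<times>D)"
  have fin: "finite F" "F \<noteq> {}" using C D unfolding F_def by auto
  have "near A e F" unfolding near_def
  proof (intro conjI ballI)
    fix y assume "y \<in> F"
    then obtain c d where cd: "c \<in> C" "d \<in> D" "y = x (c,d)" unfolding F_def by auto
    then have "dist y c < e/2" using x[of "(c,d)"] by (auto simp: dist_commute)
    moreover have "c \<in> A" using cd C by auto
    moreover have "e/2 \<le> e" using \<open>dist y c < e/2\<close> zero_le_dist[of y c] by linarith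
    ultimately show "\<exists>a\<in>A. dist y a < e" by force
  next
    fix a assume "a \<in> A"
    then obtain c where c: "c \<in> C" "dist a c < e/2" using C by blast
    obtain d where d: "d \<in> D" using D by blast
    have "dist (x (c,d)) a \<le> dist (x (c,d)) c + dist c a" by (rule dist_triangle)
    moreover have "dist c (x (c,d)) < e/2" using x[of "(c,d)"] c d by auto
    ultimately have "dist (x (c,d)) a < e" using c by (simp add: dist_commute)
    then show "\<exists>y\<in>F. dist y a < e" using c d unfolding F_def by force
  qed
  then have "F \<in> \<U>" using Ue fin by blast
  have "near B e' (g ` F)" unfolding near_def
  proof (intro conjI ballI)
    fix z assume "z \<in> g ` F"
    then obtain c d where cd: "c \<in> C" "d \<in> D" "z = g (x (c,d))" unfolding F_def by auto
    then have "dist z d < e'/2" using x[of "(c,d)"] by (auto simp: dist_commute)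
    moreover have "d \<in> B" using cd D by auto
    moreover have "e'/2 \<le> e'" using \<open>dist z d < e'/2\<close> zero_le_dist[of z d] by linarith
    ultimately show "\<exists>b\<in>B. dist z b < e'" by force
  next
    fix b assume "b \<in> B"
    then obtain d where d: "d \<in> D" "dist b d < e'/2" using D by blast
    obtain c where c: "c \<in> C" using C by blast
    have "dist (g (x (c,d))) b \<le> dist (g (x (c,d))) d + dist d b" by (rule dist_triangle)
    moreover have "dist d (g (x (c,d))) < e'/2" using x[of "(c,d)"] c d by auto
    ultimately have "dist (g (x (c,d))) b < e'" using d by (simp add: dist_commute)
    then show "\<exists>z\<in>g ` F. dist z b < e'" using c d unfolding F_def by force
  qed
  then have "g ` F \<in> \<V>" using Ve fin by blast
  with \<open>F \<in> \<U>\<close> show ?thesis by blast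
qed

lemma set_pairs:
  assumes fin_sub: "nonempty_finites \<subseteq> \<Psi>" and Psi_sub: "\<Psi> \<subseteq> nonempty_compacts"
    and hm_type: "hit_and_miss_type \<Psi> \<Delta> \<or> hit_and_far_miss_type \<Psi> \<Delta>"
    and topspace: "topspace \<Delta> = \<Psi>"
    and U: "openin \<Delta> \<U>" "\<U> \<noteq> {}" and V: "openin \<Delta> \<V>" "\<V> \<noteq> {}"
  shows "\<exists>P. finite P \<and> (\<forall>(U,V)\<in>P. open U \<and> U\<noteq>{} \<and> open V \<and> V\<noteq>{}) \<and>
     (\<forall>g. (\<forall>(U,V)\<in>P. g ` U \<inter> V \<noteq> {}) \<longrightarrow> (\<exists>F\<in>\<U>. g ` F \<in> \<V>))"
proof -
  obtain A where A: "A \<in> \<U>" using U by blast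
  obtain B where B: "B \<in> \<V>" using V by blast
  obtain e where e: "e > 0" "\<forall>F. finite F \<longrightarrow> F \<noteq> {} \<longrightarrow> near A e F \<longrightarrow> F \<in> \<U>"
    using approx_Delta[OF fin_sub Psi_sub hm_type U(1)] A unfolding approx_open_def by blast
  obtain e' where e': "e' > 0" "\<forall>F. finite F \<longrightarrow> F \<noteq> {} \<longrightarrow> near B e' F \<longrightarrow> F \<in> \<V>"
    using approx_Delta[OF fin_sub Psi_sub hm_type V(1)] B unfolding approx_open_def by blast
  have "A \<in> \<Psi>" "B \<in> \<Psi>" using A B openin_subset[OF U(1)] openin_subset[OF V(1)] topspace by auto
  then have AB: "compact A" "A \<noteq> {}" "compact B" "B \<noteq> {}"
    using Psi_sub unfolding nonempty_compacts_def by auto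
  obtain C where C: "finite C" "C \<subseteq> A" "C \<noteq> {}" "\<forall>a\<in>A. \<exists>c\<in>C. dist a c < e/2"
    using finite_cover[of A "e/2"] AB e by auto
  obtain D where D: "finite D" "D \<subseteq> B" "D \<noteq> {}" "\<forall>b\<in>B. \<exists>d\<in>D. dist b d < e'/2"
    using finite_cover[of B "e'/2"] AB e' by auto
  define P where "P = (\<lambda>(c,d). (ball c (e/2), ball d (e'/2))) ` (C \<times> D)"
  show ?thesis
  proof (intro exI[of _ P] conjI allI impI)
    show "finite P" using C D unfolding P_def by auto
    show "\<forall>(U,V)\<in>P. open U \<and> U\<noteq>{} \<and> open V \<and> V\<noteq>{}" using e e' unfolding P_def by auto
    fix g :: "'a \<Rightarrow> 'a" assume "\<forall>(U,V)\<in>P. g ` U \<inter> V \<noteq> {}"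
    then have "\<forall>c\<in>C. \<forall>d\<in>D. g ` ball c (e/2) \<inter> ball d (e'/2) \<noteq> {}"
    proof (intro ballI)
      fix c d assume hh: "\<forall>(U,V)\<in>P. g ` U \<inter> V \<noteq> {}" and cd: "c \<in> C" "d \<in> D"
      have "(ball c (e/2), ball d (e'/2)) \<in> P" unfolding P_def using cd by force
      then show "g ` ball c (e/2) \<inter> ball d (e'/2) \<noteq> {}" using hh by auto
    qed
    then show "\<exists>F\<in>\<U>. g ` F \<in> \<V>" by (rule pair_step[OF e(2) e'(2) C D])
  qed
qed


lemma omega_cont:
  assumes cont: "\<And>n. n \<ge> 1 \<Longrightarrow> continuous_on UNIV (f n)"
  shows "continuous_on UNIV (omega f m)"
proof (induction m)
  case 0 then show ?case by (simp add: continuous_on_id)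
next
  case (Suc m)
  have "continuous_on UNIV (f (Suc m))" using cont by simp
  then show ?case using Suc continuous_on_compose[of UNIV "omega f m" "f (Suc m)"]
    by (simp add: continuous_on_subset)
qed

lemma f_omega_comm:
  assumes "commutative_system f" "k \<ge> 1"
  shows "f k (omega f m x) = omega f m (f k x)"
proof (induction m arbitrary: x)
  case 0 then show ?case by simp
next
  case (Suc m)
  have fc: "f k \<circ> f (Suc m) = f (Suc m) \<circ> f k"
    using assms unfolding commutative_system_def by simp
  have "f k (f (Suc m) y) = f (Suc m) (f k y)" for y
    using fun_cong[OF fc, of y] by simp
  then show ?case using Suc by simp
qed

lemma omega_comm:
  assumes "commutative_system f"
  shows "omega f n (omega f m x) = omega f m (omega f n x)"
proof (induction n arbitrary: x)
  case 0 then show ?case by simp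
next
  case (Suc n)
  then show ?case using f_omega_comm[OF assms, of "Suc n"] by simp
qed

lemma furstenberg:
  assumes wm2: "weakly_mixing_order euclidean (omega f) 2"
    and comm: "commutative_system f"
    and cont: "\<And>n. n \<ge> 1 \<Longrightarrow> continuous_on UNIV (f n)"
    and o: "open U1" "U1 \<noteq> {}" "open V1" "V1 \<noteq> {}" "open U2" "U2 \<noteq> {}" "open V2" "V2 \<noteq> {}"
  shows "\<exists>U3 V3. open U3 \<and> U3 \<noteq> {} \<and> open V3 \<and> V3 \<noteq> {} \<and>
    (\<forall>n. omega f n ` U3 \<inter> V3 \<noteq> {} \<longrightarrow> omega f n ` U1 \<inter> V1 \<noteq> {} \<and> omega f n ` U2 \<inter> V2 \<noteq> {})"
proof -
  define UU where "UU i = (if i = 0 then U1 else V1)" for i :: nat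
  define VV where "VV i = (if i = 0 then U2 else V2)" for i :: nat
  have "\<forall>i<2. openin euclidean (UU i) \<and> UU i \<noteq> {} \<and> openin euclidean (VV i) \<and> VV i \<noteq> {}"
    using o unfolding UU_def VV_def by (auto simp: open_openin[symmetric])
  then have "\<exists>m\<ge>1. \<forall>i<2. omega f m ` (UU i) \<inter> VV i \<noteq> {}"
    by (rule wm2[unfolded weakly_mixing_order_def, THEN spec[where x=UU], THEN spec[where x=VV], THEN mp])
  then obtain m where m: "\<forall>i<2. omega f m ` (UU i) \<inter> VV i \<noteq> {}" by blast
  have m1: "omega f m ` U1 \<inter> U2 \<noteq> {}" using m[rule_format, of 0] unfolding UU_def VV_def by simp
  have m2: "omega f m ` V1 \<inter> V2 \<noteq> {}" using m[rule_format, of 1] unfolding UU_def VV_def by simp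
  define U3 where "U3 = U1 \<inter> omega f m -` U2"
  define V3 where "V3 = V1 \<inter> omega f m -` V2"
  have oc: "continuous_on UNIV (omega f m)" using cont by (rule omega_cont)
  have "open (omega f m -` U2)" "open (omega f m -` V2)"
    using oc o continuous_on_open_vimage[of UNIV "omega f m"] by auto
  then have oo: "open U3" "open V3" using o unfolding U3_def V3_def by auto
  have ne: "U3 \<noteq> {}" "V3 \<noteq> {}" using m1 m2 unfolding U3_def V3_def by auto
  have imp: "omega f n ` U1 \<inter> V1 \<noteq> {} \<and> omega f n ` U2 \<inter> V2 \<noteq> {}"
    if hn: "omega f n ` U3 \<inter> V3 \<noteq> {}" for n
  proof -
    obtain x where x: "x \<in> U3" "omega f n x \<in> V3" using hn by blast
    have "omega f m x \<in> U2" "omega f n (omega f m x) \<in> V2"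
      using x omega_comm[OF comm, of n m x] unfolding U3_def V3_def by auto
    moreover have "x \<in> U1" "omega f n x \<in> V1" using x unfolding U3_def V3_def by auto
    ultimately show ?thesis by blast
  qed
  show ?thesis
    apply (rule exI[of _ U3], rule exI[of _ V3])
    using oo ne imp by simp
qed

lemma furstenberg_k:
  fixes k :: nat and f :: "nat \<Rightarrow> 'a::topological_space \<Rightarrow> 'a"
  assumes wm2: "weakly_mixing_order euclidean (omega f) 2"
    and comm: "commutative_system f"
    and cont: "\<And>n. n \<ge> 1 \<Longrightarrow> continuous_on UNIV (f n)"
  shows "\<forall>U V. (\<forall>i<k. open (U i) \<and> U i \<noteq> {} \<and> open (V i) \<and> V i \<noteq> {}) \<longrightarrow>
    (\<exists>U' V'. open U' \<and> U' \<noteq> {} \<and> open V' \<and> V' \<noteq> {} \<and>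
      (\<forall>n. omega f n ` U' \<inter> V' \<noteq> {} \<longrightarrow> (\<forall>i<k. omega f n ` U i \<inter> V i \<noteq> {})))"
proof (induction k)
  case 0 then show ?case by (intro allI impI exI[of _ UNIV]) auto
next
  case (Suc k)
  show ?case
  proof (intro allI impI)
    fix U V :: "nat \<Rightarrow> 'a set"
    assume h: "\<forall>i<Suc k. open (U i) \<and> U i \<noteq> {} \<and> open (V i) \<and> V i \<noteq> {}"
    have hk: "\<forall>i<k. open (U i) \<and> U i \<noteq> {} \<and> open (V i) \<and> V i \<noteq> {}" using h by auto
    have "\<exists>U' V'. open U' \<and> U' \<noteq> {} \<and> open V' \<and> V' \<noteq> {} \<and>
      (\<forall>n. omega f n ` U' \<inter> V' \<noteq> {} \<longrightarrow> (\<forall>i<k. omega f n ` U i \<inter> V i \<noteq> {}))"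
      by (rule Suc.IH[THEN spec[where x=U], THEN spec[where x=V], THEN mp, OF hk])
    then obtain U' V' where UV': "open U'" "U' \<noteq> {}" "open V'" "V' \<noteq> {}"
      "\<forall>n. omega f n ` U' \<inter> V' \<noteq> {} \<longrightarrow> (\<forall>i<k. omega f n ` U i \<inter> V i \<noteq> {})"
      by blast
    have k: "open (U k)" "U k \<noteq> {}" "open (V k)" "V k \<noteq> {}" using h by auto
    obtain U3 V3 where 3: "open U3" "U3 \<noteq> {}" "open V3" "V3 \<noteq> {}"
      "\<forall>n. omega f n ` U3 \<inter> V3 \<noteq> {} \<longrightarrow> omega f n ` U' \<inter> V' \<noteq> {} \<and> omega f n ` U k \<inter> V k \<noteq> {}"
      using furstenberg[OF wm2 comm cont UV'(1-4) k] by blast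
    show "\<exists>U' V'. open U' \<and> U' \<noteq> {} \<and> open V' \<and> V' \<noteq> {} \<and>
      (\<forall>n. omega f n ` U' \<inter> V' \<noteq> {} \<longrightarrow> (\<forall>i<Suc k. omega f n ` U i \<inter> V i \<noteq> {}))"
    proof (rule exI[of _ U3], rule exI[of _ V3], intro conjI allI impI 3(1-4))
      fix n i assume n: "omega f n ` U3 \<inter> V3 \<noteq> {}" and i: "i < Suc k"
      then have a: "omega f n ` U' \<inter> V' \<noteq> {}" "omega f n ` U k \<inter> V k \<noteq> {}" using 3(5) by auto
      show "omega f n ` U i \<inter> V i \<noteq> {}"
      proof (cases "i < k")
        case True then show ?thesis using UV'(5) a(1) by blast
      next
        case False then have "i = k" using i by simp
        then show ?thesis using a(2) by simp
      qed
    qed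
  qed
qed

lemma all_orders_from_2:
  fixes f :: "nat \<Rightarrow> 'a::topological_space \<Rightarrow> 'a"
  assumes wm2: "weakly_mixing_order euclidean (omega f) 2"
    and comm: "commutative_system f"
    and cont: "\<And>n. n \<ge> 1 \<Longrightarrow> continuous_on UNIV (f n)"
  shows "weakly_mixing_all_orders euclidean (omega f)"
  unfolding weakly_mixing_all_orders_def
proof (intro allI impI)
  fix k :: nat assume "k \<ge> 1"
  show "weakly_mixing_order euclidean (omega f) k"
    unfolding weakly_mixing_order_def
  proof (intro allI impI)
    fix U V :: "nat \<Rightarrow> 'a set"
    assume "\<forall>i<k. openin euclidean (U i) \<and> U i \<noteq> {} \<and> openin euclidean (V i) \<and> V i \<noteq> {}"
    then have "\<forall>i<k. open (U i) \<and> U i \<noteq> {} \<and> open (V i) \<and> V i \<noteq> {}"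
      by (simp add: open_openin[symmetric])
    then have "\<exists>U' V'. open U' \<and> U' \<noteq> {} \<and> open V' \<and> V' \<noteq> {} \<and>
      (\<forall>n. omega f n ` U' \<inter> V' \<noteq> {} \<longrightarrow> (\<forall>i<k. omega f n ` U i \<inter> V i \<noteq> {}))"
      using furstenberg_k[where f=f and k=k, OF wm2 comm cont] by blast
    then obtain U' V' where UV': "open U'" "U' \<noteq> {}" "open V'" "V' \<noteq> {}"
      "\<forall>n. omega f n ` U' \<inter> V' \<noteq> {} \<longrightarrow> (\<forall>i<k. omega f n ` U i \<inter> V i \<noteq> {})"
      by blast
    have "\<forall>i<(2::nat). openin euclidean ((\<lambda>_. U') i) \<and> (\<lambda>_. U') i \<noteq> {} \<and> openin euclidean ((\<lambda>_. V') i) \<and> (\<lambda>_. V') i \<noteq> {}"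
      using UV' by (simp add: open_openin[symmetric])
    then have "\<exists>n\<ge>1. \<forall>i<(2::nat). omega f n ` ((\<lambda>_. U') i) \<inter> (\<lambda>_. V') i \<noteq> {}"
      by (rule wm2[unfolded weakly_mixing_order_def, THEN spec[where x="\<lambda>_. U'"], THEN spec[where x="\<lambda>_. V'"], THEN mp])
    then obtain n where n: "n \<ge> 1" "\<forall>i<(2::nat). omega f n ` ((\<lambda>_. U') i) \<inter> (\<lambda>_. V') i \<noteq> {}"
      by blast
    have "omega f n ` U' \<inter> V' \<noteq> {}" using n(2)[rule_format, of 0] by simp
    with n(1) show "\<exists>n\<ge>1. \<forall>i<k. omega f n ` U i \<inter> V i \<noteq> {}" using UV'(5) by blast
  qed
qed

lemma wm2_X:
  assumes fin_sub: "nonempty_finites \<subseteq> \<Psi>"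
    and hm_type: "hit_and_miss_type \<Psi> \<Delta> \<or> hit_and_far_miss_type \<Psi> \<Delta>"
    and basis: "topological_basis \<beta>" "\<forall>U\<in>\<beta>. openin \<Delta> (miss \<Psi> U)"
    and wm: "weakly_mixing \<Delta> (omega_bar f)"
  shows "weakly_mixing_order euclidean (omega f) 2"
  unfolding weakly_mixing_order_def
proof (intro allI impI)
  fix U V :: "nat \<Rightarrow> 'a set"
  assume h: "\<forall>i<2. openin euclidean (U i) \<and> U i \<noteq> {} \<and> openin euclidean (V i) \<and> V i \<noteq> {}"
  have "\<forall>i. \<exists>W. i < 2 \<longrightarrow> W \<in> \<beta> \<and> W \<noteq> {} \<and> W \<subseteq> V i"
  proof
    fix i show "\<exists>W. i < 2 \<longrightarrow> W \<in> \<beta> \<and> W \<noteq> {} \<and> W \<subseteq> V i"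
    proof (cases "i < 2")
      case True
      then obtain b where "b \<in> V i" "open (V i)" using h by (auto simp: open_openin[symmetric])
      then obtain W where "W \<in> \<beta>" "b \<in> W" "W \<subseteq> V i" using topological_basisE[OF basis(1)] by metis
      then show ?thesis by blast
    qed auto
  qed
  then have "\<exists>W. \<forall>i. i < 2 \<longrightarrow> W i \<in> \<beta> \<and> W i \<noteq> {} \<and> W i \<subseteq> V i" by (rule choice)
  then obtain W where W0: "\<forall>i. i < 2 \<longrightarrow> W i \<in> \<beta> \<and> W i \<noteq> {} \<and> W i \<subseteq> V i" by blast
  have W: "\<And>i. i < 2 \<Longrightarrow> W i \<in> \<beta> \<and> W i \<noteq> {} \<and> W i \<subseteq> V i" using W0 by blast
  define UU where "UU i = hit \<Psi> (U i)" for i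
  define VV where "VV i = miss \<Psi> (W i)" for i
  have single: "{x} \<in> \<Psi>" for x using fin_sub unfolding nonempty_finites_def by auto
  have "\<forall>i<2. openin \<Delta> (UU i) \<and> UU i \<noteq> {} \<and> openin \<Delta> (VV i) \<and> VV i \<noteq> {}"
  proof (intro allI impI conjI)
    fix i :: nat assume i: "i < 2"
    show "openin \<Delta> (UU i)" unfolding UU_def using hit_open[OF hm_type] h i by (auto simp: open_openin[symmetric])
    show "openin \<Delta> (VV i)" unfolding VV_def using basis(2) W i by blast
    obtain u where "u \<in> U i" using h i by auto
    then show "UU i \<noteq> {}" unfolding UU_def hit_def using single[of u] by auto
    obtain v where "v \<in> W i" using W i by auto
    then show "VV i \<noteq> {}" unfolding VV_def miss_def using single[of v] by auto
  qed
  then have "\<exists>n\<ge>1. \<forall>i<2. omega_bar f n ` (UU i) \<inter> VV i \<noteq> {}"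
    by (rule wm[unfolded weakly_mixing_def weakly_mixing_order_def, THEN spec[where x=UU], THEN spec[where x=VV], THEN mp])
  then obtain n where n: "n \<ge> 1" "\<forall>i<2. omega_bar f n ` (UU i) \<inter> VV i \<noteq> {}" by blast
  show "\<exists>n\<ge>1. \<forall>i<2. omega f n ` U i \<inter> V i \<noteq> {}"
  proof (intro exI[of _ n] conjI allI impI)
    fix i :: nat assume i: "i < 2"
    then obtain A where A: "A \<in> UU i" "omega_bar f n A \<in> VV i" using n by blast
    then obtain x where "x \<in> A" "x \<in> U i" unfolding UU_def hit_def by auto
    moreover have "omega f n ` A \<subseteq> V i" using A W[OF i] unfolding VV_def miss_def omega_bar_def by auto
    ultimately show "omega f n ` U i \<inter> V i \<noteq> {}" by blast
  qed (use n in auto)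
qed

lemma part_i:
  assumes fin_sub: "nonempty_finites \<subseteq> \<Psi>" and Psi_sub: "\<Psi> \<subseteq> nonempty_compacts"
    and hm_type: "hit_and_miss_type \<Psi> \<Delta> \<or> hit_and_far_miss_type \<Psi> \<Delta>"
    and topspace: "topspace \<Delta> = \<Psi>"
    and wm: "weakly_mixing_all_orders euclidean (omega f)"
  shows "weakly_mixing \<Delta> (omega_bar f)"
  unfolding weakly_mixing_def weakly_mixing_order_def
proof (intro allI impI)
  fix U V :: "nat \<Rightarrow> 'a set set"
  assume h: "\<forall>i<2. openin \<Delta> (U i) \<and> U i \<noteq> {} \<and> openin \<Delta> (V i) \<and> V i \<noteq> {}"
  have "\<forall>i. \<exists>P. i < 2 \<longrightarrow> finite P \<and> (\<forall>(U,V)\<in>P. open U \<and> U\<noteq>{} \<and> open V \<and> V\<noteq>{}) \<and>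
     (\<forall>g. (\<forall>(U,V)\<in>P. g ` U \<inter> V \<noteq> {}) \<longrightarrow> (\<exists>F\<in>U i. g ` F \<in> V i))"
  proof
    fix i show "\<exists>P. i < 2 \<longrightarrow> finite P \<and> (\<forall>(U,V)\<in>P. open U \<and> U\<noteq>{} \<and> open V \<and> V\<noteq>{}) \<and>
     (\<forall>g. (\<forall>(U,V)\<in>P. g ` U \<inter> V \<noteq> {}) \<longrightarrow> (\<exists>F\<in>U i. g ` F \<in> V i))"
    proof (cases "i < 2")
      case True
      then have hi: "openin \<Delta> (U i)" "U i \<noteq> {}" "openin \<Delta> (V i)" "V i \<noteq> {}" using h by auto
      show ?thesis using set_pairs[OF fin_sub Psi_sub hm_type topspace hi] by blast
    qed auto
  qed
  then have "\<exists>P. \<forall>i. i < 2 \<longrightarrow> finite (P i) \<and> (\<forall>(U,V)\<in>P i. open U \<and> U\<noteq>{} \<and> open V \<and> V\<noteq>{}) \<and>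
     (\<forall>g. (\<forall>(U,V)\<in>P i. g ` U \<inter> V \<noteq> {}) \<longrightarrow> (\<exists>F\<in>U i. g ` F \<in> V i))" by (rule choice)
  then obtain P where P0: "\<forall>i. i < 2 \<longrightarrow> finite (P i) \<and> (\<forall>(U,V)\<in>P i. open U \<and> U\<noteq>{} \<and> open V \<and> V\<noteq>{}) \<and>
     (\<forall>g. (\<forall>(U,V)\<in>P i. g ` U \<inter> V \<noteq> {}) \<longrightarrow> (\<exists>F\<in>U i. g ` F \<in> V i))" by blast
  have P: "\<And>i. i < 2 \<Longrightarrow> finite (P i) \<and> (\<forall>(U,V)\<in>P i. open U \<and> U\<noteq>{} \<and> open V \<and> V\<noteq>{}) \<and>
     (\<forall>g. (\<forall>(U,V)\<in>P i. g ` U \<inter> V \<noteq> {}) \<longrightarrow> (\<exists>F\<in>U i. g ` F \<in> V i))"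
    using P0 by blast
  have "finite (P 0 \<union> P 1)" using P[of 0] P[of 1] by auto
  moreover have "\<forall>(U,V)\<in>P 0 \<union> P 1. open U \<and> U\<noteq>{} \<and> open V \<and> V\<noteq>{}"
    using P[of 0] P[of 1] by auto
  ultimately have "\<exists>n\<ge>1. \<forall>(U,V)\<in>P 0 \<union> P 1. omega f n ` U \<inter> V \<noteq> {}"
    by (rule finite_mixing[OF wm])
  then obtain n where n: "n \<ge> 1" "\<forall>(U,V)\<in>P 0 \<union> P 1. omega f n ` U \<inter> V \<noteq> {}"
    by blast
  show "\<exists>n\<ge>1. \<forall>i<2. omega_bar f n ` U i \<inter> V i \<noteq> {}"
  proof (intro exI[of _ n] conjI allI impI)
    fix i :: nat assume i: "i < 2"
    then have "P i \<subseteq> P 0 \<union> P 1" by (cases i) auto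
    then have "\<forall>(U,V)\<in>P i. omega f n ` U \<inter> V \<noteq> {}" using n by blast
    then obtain F where "F \<in> U i" "omega f n ` F \<in> V i" using P[OF i] by blast
    then show "omega_bar f n ` U i \<inter> V i \<noteq> {}" unfolding omega_bar_def by blast
  qed (use n in auto)
qed

theorem mainTheorem4:
  fixes f :: "nat \<Rightarrow> 'a::metric_space \<Rightarrow> 'a"
    and \<Psi> :: "'a set set"
    and \<Delta> :: "'a set topology"
  assumes compactX: "compact (UNIV :: 'a set)"
    and cont: "\<And>n. n \<ge> 1 \<Longrightarrow> continuous_on UNIV (f n)"
    and Psi_sub: "\<Psi> \<subseteq> nonempty_compacts"
    and fin_sub: "nonempty_finites \<subseteq> \<Psi>"
    and invariant: "\<And>k A. A \<in> \<Psi> \<Longrightarrow> omega_bar f k A \<in> \<Psi>"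
    and topspace: "topspace \<Delta> = \<Psi>"
    and adm: "admissible \<Delta>"
    and hm_type: "hit_and_miss_type \<Psi> \<Delta> \<or> hit_and_far_miss_type \<Psi> \<Delta>"
    and induced_cont: "\<And>k. continuous_map \<Delta> \<Delta> (omega_bar f k)"
  shows "(weakly_mixing_all_orders euclidean (omega f) \<longrightarrow> weakly_mixing \<Delta> (omega_bar f))
    \<and> ((commutative_system f \<and>
         (\<exists>\<beta>. topological_basis \<beta> \<and> (\<forall>U\<in>\<beta>. openin \<Delta> (miss \<Psi> U))))
        \<longrightarrow> (weakly_mixing \<Delta> (omega_bar f) \<longrightarrow> weakly_mixing_all_orders euclidean (omega f)))"
proof (intro conjI impI)
  assume "weakly_mixing_all_orders euclidean (omega f)"
  then show "weakly_mixing \<Delta> (omega_bar f)"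
    by (rule part_i[OF fin_sub Psi_sub hm_type topspace])
next
  assume h: "commutative_system f \<and> (\<exists>\<beta>. topological_basis \<beta> \<and> (\<forall>U\<in>\<beta>. openin \<Delta> (miss \<Psi> U)))"
    and wm: "weakly_mixing \<Delta> (omega_bar f)"
  then obtain \<beta> where b: "topological_basis \<beta>" "\<forall>U\<in>\<beta>. openin \<Delta> (miss \<Psi> U)" by blast
  have "weakly_mixing_order euclidean (omega f) 2"
    using wm2_X[OF fin_sub hm_type b wm] .
  then show "weakly_mixing_all_orders euclidean (omega f)"
    using h by (intro all_orders_from_2[OF _ _ cont]) auto
qed
end
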